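(* Let $\mathcal K\subseteq\mathbb R^n$ be convex, $f:\mathcal K\to\mathbb R$ convex and differentiable with a minimizer $x^\star\in\mathcal K$. Let $x_1,x_2,\dots\in\mathcal K$ be arbitrary, let $w_0,w_1,\dots$ be positive numbers, and define $\bar x_t=\frac{\sum_{k=0}^tw_kx_{k+1}}{\sum_{k=0}^tw_k}$. Let $\tilde\eta_0\ge\tilde\eta_1\ge\tilde\eta_2\ge\cdots$ be positive numbers. Then for every $T>0$, \[ \sum_{t=0}^{T-1}w_t\tilde\eta_t\langle\nabla f(\bar x_t),x_{t+1}-x^\star\rangle\ge0. \] *)

theory Defs
  imports "HOL-Analysis.Analysis"
begin

end

theory Submission
  imports Defs "HOL-Analysis.Analysis"
begin
lemma grad_ineq:
  fixes f :: "'a::real_inner \<Rightarrow> real"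
  assumes cf: "convex_on K f" and d: "(f has_derivative (\<lambda>h. g \<bullet> h)) (at a)"
    and a: "a \<in> K" and b: "b \<in> K"
  shows "g \<bullet> (b - a) \<le> f b - f a"
proof -
  define v where "v = b - a"
  define \<phi> where "\<phi> = (\<lambda>t::real. f (a + t *\<^sub>R v))"
  have l: "((\<lambda>t::real. a + t *\<^sub>R v) has_derivative (\<lambda>h. h *\<^sub>R v)) (at 0)"
    by (auto intro!: derivative_eq_intros)
  have "(\<phi> has_derivative (\<lambda>h. g \<bullet> (h *\<^sub>R v))) (at 0)"
  proof -
    have d': "(f has_derivative (\<lambda>h. g \<bullet> h)) (at ((\<lambda>t::real. a + t *\<^sub>R v) 0))" using d by simp
    show ?thesis unfolding \<phi>_def using has_derivative_compose[OF l d'] by simp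
  qed
  moreover have "(\<lambda>h. g \<bullet> (h *\<^sub>R v)) = (*) (g \<bullet> v)" by (auto simp: mult.commute)
  ultimately have "(\<phi> has_field_derivative (g \<bullet> v)) (at 0)"
    by (simp add: has_field_derivative_def)
  then have "((\<lambda>y. (\<phi> y - \<phi> 0) / (y - 0)) \<longlongrightarrow> g \<bullet> v) (at 0)"
    by (simp add: has_field_derivative_iff)
  then have T: "((\<lambda>y. (\<phi> y - \<phi> 0) / (y - 0)) \<longlongrightarrow> g \<bullet> v) (at_right 0)"
    by (rule tendsto_mono[OF at_le, rotated]) simp
  have ev: "eventually (\<lambda>y. (\<phi> y - \<phi> 0) / (y - 0) \<le> f b - f a) (at_right (0::real))"
    unfolding eventually_at_right_field
  proof (intro exI[of _ 1] conjI allI impI)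
    fix t :: real assume t: "t > 0" "t < 1"
    have "f ((1 - t) *\<^sub>R a + t *\<^sub>R b) \<le> (1 - t) * f a + t * f b"
      using convex_onD[OF cf, of t a b] t a b by simp
    moreover have "(1 - t) *\<^sub>R a + t *\<^sub>R b = a + t *\<^sub>R v"
      by (simp add: v_def algebra_simps)
    ultimately have "\<phi> t - \<phi> 0 \<le> t * (f b - f a)" by (simp add: \<phi>_def algebra_simps)
    then show "(\<phi> t - \<phi> 0) / (t - 0) \<le> f b - f a" using t by (simp add: divide_le_eq mult.commute)
  qed simp
  have "g \<bullet> v \<le> f b - f a"
    by (rule tendsto_upperbound[OF T ev]) simp
  then show ?thesis by (simp add: v_def)
qed

lemma telesc:
  fixes a E eta :: "nat \<Rightarrow> real"
  assumes a0: "a 0 \<ge> E 0" and aS: "\<And>t. a (Suc t) \<ge> E (Suc t) - E t"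
    and E: "\<And>t. E t \<ge> 0" and ep: "\<And>t. eta t > 0" and em: "\<And>t. eta (Suc t) \<le> eta t"
  shows "(\<Sum>t<Suc n. eta t * a t) \<ge> eta n * E n"
proof (induction n)
  case 0 then show ?case using a0 ep[of 0] by (simp add: mult_left_mono)
next
  case (Suc n)
  have "eta (Suc n) * E n \<le> eta n * E n" using em[of n] E[of n] by (simp add: mult_right_mono)
  moreover have "eta (Suc n) * (E (Suc n) - E n) \<le> eta (Suc n) * a (Suc n)"
    using aS[of n] ep[of "Suc n"] by (simp add: mult_left_mono)
  ultimately show ?case using Suc by (simp add: algebra_simps)
qed

theorem lemma17:
  fixes K :: "(real ^ 'n) set"
    and f :: "real ^ 'n \<Rightarrow> real"
    and gradf :: "real ^ 'n \<Rightarrow> real ^ 'n"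
    and xstar :: "real ^ 'n"
    and x :: "nat \<Rightarrow> real ^ 'n"
    and w :: "nat \<Rightarrow> real"
    and eta :: "nat \<Rightarrow> real"
    and T :: nat
  assumes K_convex: "convex K"
    and f_convex: "convex_on K f"
    and f_grad: "\<And>y. y \<in> K \<Longrightarrow> (f has_derivative (\<lambda>h. gradf y \<bullet> h)) (at y)"
    and xstar_in: "xstar \<in> K"
    and xstar_min: "\<And>y. y \<in> K \<Longrightarrow> f xstar \<le> f y"
    and x_in: "\<And>k. k \<ge> 1 \<Longrightarrow> x k \<in> K"
    and w_pos: "\<And>k. w k > 0"
    and eta_pos: "\<And>k. eta k > 0"
    and eta_mono: "\<And>k. eta (Suc k) \<le> eta k"
    and T_pos: "T > 0"
  shows "(\<Sum>t<T. w t * eta t *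
            (gradf ((\<Sum>k\<le>t. w k *\<^sub>R x (k + 1)) /\<^sub>R (\<Sum>k\<le>t. w k)) \<bullet> (x (t + 1) - xstar)))
         \<ge> 0"
proof -
  define W where "W t = (\<Sum>k\<le>t. w k)" for t
  define S where "S t = (\<Sum>k\<le>t. w k *\<^sub>R x (k + 1))" for t
  define xb where "xb t = S t /\<^sub>R W t" for t
  define g where "g t = gradf (xb t)" for t
  define E where "E t = W t * (f (xb t) - f xstar)" for t
  define a where "a t = w t * (g t \<bullet> (x (t + 1) - xstar))" for t
  have Wpos: "W t > 0" for t unfolding W_def using w_pos by (simp add: sum_pos)
  have WS: "W (Suc t) = W t + w (Suc t)" for t by (simp add: W_def)
  have SS: "S (Suc t) = S t + w (Suc t) *\<^sub>R x (Suc t + 1)" for t by (simp add: S_def)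
  have Sxb: "S t = W t *\<^sub>R xb t" for t using Wpos[of t] by (simp add: xb_def)
  have xbK: "xb t \<in> K" for t
  proof -
    have "(\<Sum>k\<le>t. (w k / W t) *\<^sub>R x (k + 1)) \<in> K"
    proof (rule convex_sum[OF _ K_convex])
      show "(\<Sum>k\<le>t. w k / W t) = 1" using Wpos[of t] by (simp add: W_def sum_divide_distrib[symmetric])
      show "\<And>i. i \<in> {..t} \<Longrightarrow> 0 \<le> w i / W t" using Wpos[of t] w_pos by (simp add: less_imp_le)
      show "\<And>i. i \<in> {..t} \<Longrightarrow> x (i + 1) \<in> K" using x_in by simp
    qed simp
    moreover have "(\<Sum>k\<le>t. (w k / W t) *\<^sub>R x (k + 1)) = xb t"
      by (simp add: xb_def S_def scaleR_sum_right divide_inverse_commute)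
    ultimately show ?thesis by simp
  qed
  have gi: "g t \<bullet> (y - xb t) \<le> f y - f (xb t)" if "y \<in> K" for t y
    unfolding g_def using grad_ineq[OF f_convex f_grad[OF xbK] xbK that] .
  have E0: "E t \<ge> 0" for t
    unfolding E_def using Wpos[of t] xstar_min[OF xbK[of t]] by simp
  have a0: "a 0 \<ge> E 0"
  proof -
    have "W 0 = w 0" by (simp add: W_def)
    moreover have "xb 0 = x 1" using w_pos[of 0] by (simp add: xb_def S_def W_def)
    moreover have "g 0 \<bullet> (xstar - xb 0) \<le> f xstar - f (xb 0)" using gi[OF xstar_in] .
    then have "g 0 \<bullet> (xb 0 - xstar) \<ge> f (xb 0) - f xstar" by (simp add: inner_diff_right)
    then have "w 0 * (g 0 \<bullet> (xb 0 - xstar)) \<ge> w 0 * (f (xb 0) - f xstar)"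
      using w_pos[of 0] by (simp add: mult_left_mono)
    ultimately show ?thesis unfolding a_def E_def by simp
  qed
  have aS: "a (Suc t) \<ge> E (Suc t) - E t" for t
  proof -
    let ?g = "g (Suc t)"
    have vec: "w (Suc t) *\<^sub>R (x (Suc t + 1) - xstar) = W (Suc t) *\<^sub>R (xb (Suc t) - xstar) - W t *\<^sub>R (xb t - xstar)"
      using SS[of t] Sxb[of t] Sxb[of "Suc t"] WS[of t] by (simp add: algebra_simps)
    have "w (Suc t) * (?g \<bullet> (x (Suc t + 1) - xstar)) = ?g \<bullet> (w (Suc t) *\<^sub>R (x (Suc t + 1) - xstar))" by simp
    also have "\<dots> = W (Suc t) * (?g \<bullet> (xb (Suc t) - xstar)) - W t * (?g \<bullet> (xb t - xstar))"
      unfolding vec by (simp add: inner_diff_right)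
    finally have ea: "a (Suc t) = W (Suc t) * (?g \<bullet> (xb (Suc t) - xstar)) - W t * (?g \<bullet> (xb t - xstar))"
      by (simp add: a_def)
    define c1 where "c1 = ?g \<bullet> (xb (Suc t) - xstar)"
    define c2 where "c2 = ?g \<bullet> (xb t - xb (Suc t))"
    have split: "?g \<bullet> (xb t - xstar) = c1 + c2" unfolding c1_def c2_def by (simp add: inner_diff_right)
    have h1: "c1 \<ge> f (xb (Suc t)) - f xstar" using gi[OF xstar_in, of "Suc t"] unfolding c1_def
      by (simp add: inner_diff_right)
    have h2: "c2 \<le> f (xb t) - f (xb (Suc t))" using gi[OF xbK[of t], of "Suc t"] unfolding c2_def .
    have "a (Suc t) = W (Suc t) * c1 - W t * (c1 + c2)" using ea split unfolding c1_def by simp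
    then have "a (Suc t) = w (Suc t) * c1 - W t * c2" unfolding WS[of t] by (simp add: algebra_simps)
    moreover have "w (Suc t) * c1 \<ge> w (Suc t) * (f (xb (Suc t)) - f xstar)" using h1 w_pos by (simp add: mult_left_mono)
    moreover have "W t * c2 \<le> W t * (f (xb t) - f (xb (Suc t)))" using h2 Wpos[of t] by (simp add: mult_left_mono)
    ultimately show ?thesis unfolding E_def using WS[of t] by (simp add: algebra_simps)
  qed
  obtain n where n: "T = Suc n" using T_pos gr0_implies_Suc by blast
  have "(\<Sum>t<Suc n. eta t * a t) \<ge> eta n * E n" by (rule telesc[where a=a and E=E and eta=eta, OF a0 aS E0 eta_pos eta_mono])
  moreover have "eta n * E n \<ge> 0" using eta_pos[of n] E0[of n] by simp
  ultimately have "(\<Sum>t<T. eta t * a t) \<ge> 0" using n by simp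
  moreover have "(\<Sum>t<T. eta t * a t) = (\<Sum>t<T. w t * eta t *
            (gradf ((\<Sum>k\<le>t. w k *\<^sub>R x (k + 1)) /\<^sub>R (\<Sum>k\<le>t. w k)) \<bullet> (x (t + 1) - xstar)))"
    by (simp add: a_def g_def xb_def S_def W_def mult.assoc mult.left_commute)
  ultimately show ?thesis by simp
qed
end
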